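(* For every integer $n\ge1$ and every $u\in V$, $\Pr(E_{7u})<36\left(3\zeta(3)+\tfrac18\right)\dfrac{\ln(2n)}{\ln^{3}(n+1)}$, where $\zeta(3)=\sum_{i\ge1} i^{-3}$.
   Context: For an integer $n\ge1$, the $n$-octahedral graph $G'_n=(V,E')$ is the undirected graph with vertex set $V=\{u\in\mathbb{Z}^3:|u_1|+|u_2|+|u_3|=n\}$ and edge set $E'=\{\{v,w\}\subset V: v\neq w,\ |v_i-w_i|\le 1 \text{ for all } i=1,2,3\}$. For $u,v\in V$, $d_{uv}$ denotes the shortest-path distance in $G'_n$, and $Z_u=\left(\sum_{w\in V\setminus\{u\}} d_{uw}^{-2}\right)^{-1}$. The OSW random graph $G_n=(V,E)$ is the directed graph in which, for every $\{u,v\}\in E'$, both $(u,v),(v,u)\in E$, and in addition each vertex $u\in V$, independently of the others, chooses one vertex $v\in V\setminus\{u\}$ with probability $Z_u d_{uv}^{-2}$ and the long-range edge $(u,v)$ is added; $C_{uv}$ denotes the event that $u$ chooses $v$. For an ordered pair $(x,y)$ of distinct vertices, say $(x,y)$ is of type $s$ if $\{x,y\}\in E'$, and of type $w$ if $d_{xy}\ge2$ and $C_{xy}$ occurs. A C3 rooted at $u$ of type $(t_1,t_2,t_3)\in\{s,w\}^3$ is a triple $(u,a,b)$ of pairwise distinct vertices such that $(u,a)$ is of type $t_1$, $(a,b)$ is of type $t_2$ and $(b,u)$ is of type $t_3$. $E_{7u}$ is the event that there exists a C3 rooted at $u$ of type $(w,w,w)$. *)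

theory Defs
  imports "HOL-Probability.Probability"
begin

type_synonym vtx = "int \<times> int \<times> int"

definition octV :: "nat \<Rightarrow> vtx set" where
  "octV n = {(a, b, c). \<bar>a\<bar> + \<bar>b\<bar> + \<bar>c\<bar> = int n}"

definition octE :: "nat \<Rightarrow> (vtx \<times> vtx) set" where
  "octE n = {((a1, a2, a3), (b1, b2, b3)).
     (a1, a2, a3) \<in> octV n \<and> (b1, b2, b3) \<in> octV n \<and> (a1, a2, a3) \<noteq> (b1, b2, b3) \<and>
     \<bar>a1 - b1\<bar> \<le> 1 \<and> \<bar>a2 - b2\<bar> \<le> 1 \<and> \<bar>a3 - b3\<bar> \<le> 1}"

definition octd :: "nat \<Rightarrow> vtx \<Rightarrow> vtx \<Rightarrow> nat" where
  "octd n u v = (LEAST k. (u, v) \<in> octE n ^^ k)"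

definition Zc :: "nat \<Rightarrow> vtx \<Rightarrow> real" where
  "Zc n u = inverse (\<Sum>w\<in>octV n - {u}. 1 / (real (octd n u w))\<^sup>2)"

definition choice_pmf :: "nat \<Rightarrow> vtx \<Rightarrow> vtx pmf" where
  "choice_pmf n u = embed_pmf (\<lambda>v. if v \<in> octV n - {u}
                                     then Zc n u * (1 / (real (octd n u v))\<^sup>2) else 0)"

text \<open>The independent choices of all vertices; an outcome \<omega> maps each vertex u
  to the vertex it chooses, so C_uv is the event \<omega> u = v.\<close>
definition OSW_space :: "nat \<Rightarrow> (vtx \<Rightarrow> vtx) pmf" where
  "OSW_space n = Pi_pmf (octV n) undefined (choice_pmf n)"

definition chooses :: "(vtx \<Rightarrow> vtx) \<Rightarrow> vtx \<Rightarrow> vtx \<Rightarrow> bool" where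
  "chooses \<omega> u v \<longleftrightarrow> \<omega> u = v"

definition type_s :: "nat \<Rightarrow> vtx \<Rightarrow> vtx \<Rightarrow> bool" where
  "type_s n x y \<longleftrightarrow> (x, y) \<in> octE n"

definition type_w :: "nat \<Rightarrow> (vtx \<Rightarrow> vtx) \<Rightarrow> vtx \<Rightarrow> vtx \<Rightarrow> bool" where
  "type_w n \<omega> x y \<longleftrightarrow> x \<noteq> y \<and> octd n x y \<ge> 2 \<and> chooses \<omega> x y"

definition E7 :: "nat \<Rightarrow> vtx \<Rightarrow> (vtx \<Rightarrow> vtx) set" where
  "E7 n u = {\<omega>. \<exists>a\<in>octV n. \<exists>b\<in>octV n. u \<noteq> a \<and> u \<noteq> b \<and> a \<noteq> b \<and>
                 type_w n \<omega> u a \<and> type_w n \<omega> a b \<and> type_w n \<omega> b u}"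

end

theory Submission
  imports Defs
begin


definition dinf :: "vtx \<Rightarrow> vtx \<Rightarrow> nat" where
 "dinf v w = (case v of (a1,a2,a3) \<Rightarrow> case w of (b1,b2,b3) \<Rightarrow> nat (max \<bar>a1-b1\<bar> (max \<bar>a2-b2\<bar> \<bar>a3-b3\<bar>)))"

lemma dinf_simp[simp]: "dinf (a1,a2,a3) (b1,b2,b3) = nat (max \<bar>a1-b1\<bar> (max \<bar>a2-b2\<bar> \<bar>a3-b3\<bar>))"
  by (simp add: dinf_def)

lemma dinf_sym: "dinf v w = dinf w v"
  by (cases v; cases w) (simp add: abs_minus_commute)

lemma dinf_tri: "dinf u w \<le> dinf u v + dinf v w"
proof -
  obtain a1 a2 a3 where u: "u = (a1,a2,a3)" by (cases u) auto
  obtain b1 b2 b3 where v: "v = (b1,b2,b3)" by (cases v) auto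
  obtain c1 c2 c3 where w: "w = (c1,c2,c3)" by (cases w) auto
  let ?x = "max \<bar>a1-b1\<bar> (max \<bar>a2-b2\<bar> \<bar>a3-b3\<bar>)"
  let ?y = "max \<bar>b1-c1\<bar> (max \<bar>b2-c2\<bar> \<bar>b3-c3\<bar>)"
  let ?z = "max \<bar>a1-c1\<bar> (max \<bar>a2-c2\<bar> \<bar>a3-c3\<bar>)"
  have x1: "\<bar>a1-b1\<bar> \<le> ?x" and x2: "\<bar>a2-b2\<bar> \<le> ?x" and x3: "\<bar>a3-b3\<bar> \<le> ?x" by auto
  have y1: "\<bar>b1-c1\<bar> \<le> ?y" and y2: "\<bar>b2-c2\<bar> \<le> ?y" and y3: "\<bar>b3-c3\<bar> \<le> ?y" by auto
  have t1: "\<bar>a1-c1\<bar> \<le> \<bar>a1-b1\<bar> + \<bar>b1-c1\<bar>" by arith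
  have t2: "\<bar>a2-c2\<bar> \<le> \<bar>a2-b2\<bar> + \<bar>b2-c2\<bar>" by arith
  have t3: "\<bar>a3-c3\<bar> \<le> \<bar>a3-b3\<bar> + \<bar>b3-c3\<bar>" by arith
  have "?z \<le> ?x + ?y"
    using add_mono[OF x1 y1] add_mono[OF x2 y2] add_mono[OF x3 y3] t1 t2 t3
    by (intro max.boundedI) (meson order_trans)+
  moreover have "?x \<ge> 0" "?y \<ge> 0" by auto
  ultimately have "nat ?z \<le> nat ?x + nat ?y"
    by (metis nat_add_distrib nat_mono)
  then show ?thesis using u v w by simp
qed

lemma dinf_self[simp]: "dinf v v = 0"
  by (cases v) simp

lemma dinf_0: "dinf v w = 0 \<longleftrightarrow> v = w"
  by (cases v; cases w) (simp add: max.bounded_iff)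

lemma octV_mem[simp]: "(a,b,c) \<in> octV n \<longleftrightarrow> \<bar>a\<bar>+\<bar>b\<bar>+\<bar>c\<bar> = int n"
  by (simp add: octV_def)

lemma dinf_le_2n: assumes "v \<in> octV n" "w \<in> octV n" shows "dinf v w \<le> 2*n"
proof -
  obtain a1 a2 a3 where u: "v = (a1,a2,a3)" by (cases v) auto
  obtain b1 b2 b3 where w: "w = (b1,b2,b3)" by (cases w) auto
  have "max \<bar>a1-b1\<bar> (max \<bar>a2-b2\<bar> \<bar>a3-b3\<bar>) \<le> 2 * int n"
    using assms u w by (simp add: abs_le_iff; arith)
  then show ?thesis using u w by (simp only: dinf_simp nat_le_iff)
qed

lemma octE_dinf: "(v,w) \<in> octE n \<Longrightarrow> dinf v w \<le> 1"
  by (cases v; cases w) (simp add: octE_def nat_le_iff max.bounded_iff)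

lemma octE_sym: "(v,w) \<in> octE n \<Longrightarrow> (w,v) \<in> octE n"
  by (cases v; cases w) (auto simp: octE_def abs_minus_commute)

lemma relpow_dinf: "(v,w) \<in> octE n ^^ k \<Longrightarrow> dinf v w \<le> k"
proof (induction k arbitrary: w)
  case 0 then show ?case by simp
next
  case (Suc k)
  then obtain y where "(v,y) \<in> octE n ^^ k" "(y,w) \<in> octE n" by auto
  then show ?case using Suc.IH octE_dinf dinf_tri[of v w y]
    by (metis add_le_mono add.commute plus_1_eq_Suc dinf_tri order_trans)
qed


definition sg :: "bool \<Rightarrow> int \<Rightarrow> int" where "sg p x = (if p then x else -x)"

definition fl :: "bool \<times> bool \<times> bool \<Rightarrow> vtx \<Rightarrow> vtx" where
  "fl s v = (case s of (p,q,r) \<Rightarrow> case v of (a,b,c) \<Rightarrow> (sg p a, sg q b, sg r c))"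

lemma fl_simp[simp]: "fl (p,q,r) (a,b,c) = (sg p a, sg q b, sg r c)"
  by (simp add: fl_def)

lemma sg_sg[simp]: "sg p (sg p x) = x" by (simp add: sg_def)
lemma sg_abs[simp]: "\<bar>sg p x\<bar> = \<bar>x\<bar>" by (simp add: sg_def)
lemma sg_diff: "\<bar>sg p x - sg p y\<bar> = \<bar>x - y\<bar>" by (simp add: sg_def abs_minus_commute)
lemma sg_inj[simp]: "sg p x = sg p y \<longleftrightarrow> x = y" by (auto simp: sg_def)

lemma fl_fl[simp]: "fl s (fl s v) = v"
  by (cases s; cases v) simp

lemma fl_inj[simp]: "fl s v = fl s w \<longleftrightarrow> v = w"
  by (metis fl_fl)

lemma fl_V[simp]: "fl s v \<in> octV n \<longleftrightarrow> v \<in> octV n"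
  by (cases s; cases v) simp

lemma fl_dinf[simp]: "dinf (fl s v) (fl s w) = dinf v w"
  by (cases s; cases v; cases w) (simp add: sg_diff)

lemma fl_E[simp]: "(fl s v, fl s w) \<in> octE n \<longleftrightarrow> (v,w) \<in> octE n"
  by (cases s; cases v; cases w) (simp add: octE_def sg_diff)

lemma fl_relpow: "(v,w) \<in> octE n ^^ k \<Longrightarrow> (fl s v, fl s w) \<in> octE n ^^ k"
proof (induction k arbitrary: w)
  case 0 then show ?case by simp
next
  case (Suc k)
  then obtain y where "(v,y) \<in> octE n ^^ k" "(y,w) \<in> octE n" by auto
  then show ?case using Suc.IH by (meson fl_E relpow_Suc_I)
qed

definition Fp :: "nat \<Rightarrow> vtx set" where
  "Fp n = {(a,b,c). a \<ge> 0 \<and> b \<ge> 0 \<and> c \<ge> 0 \<and> a + b + c = int n}"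

lemma Fp_mem[simp]: "(a,b,c) \<in> Fp n \<longleftrightarrow> a \<ge> 0 \<and> b \<ge> 0 \<and> c \<ge> 0 \<and> a + b + c = int n"
  by (simp add: Fp_def)

lemma Fp_V: "v \<in> Fp n \<Longrightarrow> v \<in> octV n"
  by (cases v) auto

lemma V_face: "v \<in> octV n \<Longrightarrow> \<exists>s. fl s v \<in> Fp n"
proof -
  assume v: "v \<in> octV n"
  obtain a b c where abc: "v = (a,b,c)" by (cases v) auto
  have "fl (a \<ge> 0, b \<ge> 0, c \<ge> 0) v \<in> Fp n" using v abc by (auto simp: sg_def)
  then show ?thesis by blast
qed

definition L1 :: "vtx \<Rightarrow> vtx \<Rightarrow> int" where
  "L1 v w = (case v of (a1,a2,a3) \<Rightarrow> case w of (b1,b2,b3) \<Rightarrow> \<bar>a1-b1\<bar> + \<bar>a2-b2\<bar> + \<bar>a3-b3\<bar>)"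

lemma L1_simp[simp]: "L1 (a1,a2,a3) (b1,b2,b3) = \<bar>a1-b1\<bar> + \<bar>a2-b2\<bar> + \<bar>a3-b3\<bar>"
  by (simp add: L1_def)

lemma Fp_L1: assumes "x \<in> Fp n" "y \<in> Fp n" shows "L1 x y = 2 * int (dinf x y)"
proof -
  obtain a1 a2 a3 where u: "x = (a1,a2,a3)" by (cases x) auto
  obtain b1 b2 b3 where w: "y = (b1,b2,b3)" by (cases y) auto
  have s: "(a1-b1) + (a2-b2) + (a3-b3) = 0" using assms u w by auto
  have m: "max \<bar>a1-b1\<bar> (max \<bar>a2-b2\<bar> \<bar>a3-b3\<bar>) \<ge> 0" by auto
  have "\<bar>a1-b1\<bar> + \<bar>a2-b2\<bar> + \<bar>a3-b3\<bar> = 2 * max \<bar>a1-b1\<bar> (max \<bar>a2-b2\<bar> \<bar>a3-b3\<bar>)"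
    using s by (simp add: max_def abs_if)
  then show ?thesis using u w m by simp
qed

lemma dinf_le1: "dinf (a1,a2,a3) (b1,b2,b3) \<le> 1 \<longleftrightarrow> \<bar>a1-b1\<bar> \<le> 1 \<and> \<bar>a2-b2\<bar> \<le> 1 \<and> \<bar>a3-b3\<bar> \<le> 1"
  by (simp only: dinf_simp nat_le_iff max.bounded_iff) simp

lemma octE_mem: "((a1,a2,a3),(b1,b2,b3)) \<in> octE n \<longleftrightarrow> (a1,a2,a3) \<in> octV n \<and> (b1,b2,b3) \<in> octV n \<and>
   (a1,a2,a3) \<noteq> (b1,b2,b3) \<and> \<bar>a1-b1\<bar> \<le> 1 \<and> \<bar>a2-b2\<bar> \<le> 1 \<and> \<bar>a3-b3\<bar> \<le> 1"
  unfolding octE_def by (simp only: mem_Collect_eq prod.case)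

lemma Fp_edge: assumes "x \<in> Fp n" "x' \<in> Fp n" "x \<noteq> x'" "dinf x x' \<le> 1" shows "(x,x') \<in> octE n"
proof -
  obtain a1 a2 a3 where u: "x = (a1,a2,a3)" by (cases x) auto
  obtain b1 b2 b3 where w: "x' = (b1,b2,b3)" by (cases x') auto
  show ?thesis using assms Fp_V[OF assms(1)] Fp_V[OF assms(2)] unfolding u w octE_mem dinf_le1 by blast
qed

lemma Fp_step:
  assumes "x \<in> Fp n" "y \<in> Fp n" "x \<noteq> y"
  shows "\<exists>x'. x' \<in> Fp n \<and> (x,x') \<in> octE n \<and> L1 x' y + 2 = L1 x y"
proof -
  obtain a1 a2 a3 where u: "x = (a1,a2,a3)" by (cases x) auto
  obtain b1 b2 b3 where w: "y = (b1,b2,b3)" by (cases y) auto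
  have s: "a1+a2+a3 = b1+b2+b3" and nn: "a1 \<ge> 0" "a2 \<ge> 0" "a3 \<ge> 0" "b1 \<ge> 0" "b2 \<ge> 0" "b3 \<ge> 0"
    using assms u w by auto
  have sn: "a1+a2+a3 = int n" using assms u by auto
  have ne: "a1 \<noteq> b1 \<or> a2 \<noteq> b2 \<or> a3 \<noteq> b3" using assms u w by auto
  have "\<exists>c1 c2 c3. (c1,c2,c3) \<in> Fp n \<and> (c1,c2,c3) \<noteq> (a1,a2,a3) \<and> dinf (a1,a2,a3) (c1,c2,c3) \<le> 1
        \<and> L1 (c1,c2,c3) (b1,b2,b3) + 2 = L1 (a1,a2,a3) (b1,b2,b3)"
  proof -
    have dj: "(a1 < b1 \<and> a2 > b2) \<or> (a1 < b1 \<and> a3 > b3) \<or> (a2 < b2 \<and> a1 > b1) \<or> (a2 < b2 \<and> a3 > b3)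
      \<or> (a3 < b3 \<and> a1 > b1) \<or> (a3 < b3 \<and> a2 > b2)" using s ne by arith
    consider "a1 < b1" "a2 > b2" | "a1 < b1" "a3 > b3" | "a2 < b2" "a1 > b1" | "a2 < b2" "a3 > b3"
      | "a3 < b3" "a1 > b1" | "a3 < b3" "a2 > b2"
      using dj by blast
    then show ?thesis
    proof cases
      case 1 show ?thesis
        apply (rule exI[of _ "a1+1"], rule exI[of _ "a2-1"], rule exI[of _ a3])
        apply (insert 1 s nn sn)
        apply (simp only: Fp_mem L1_simp dinf_le1 prod.inject de_Morgan_conj)
        apply (intro conjI)
        apply arith+
        done
    next
      case 2 show ?thesis
        apply (rule exI[of _ "a1+1"], rule exI[of _ "a2"], rule exI[of _ "a3-1"])
        apply (insert 2 s nn sn)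
        apply (simp only: Fp_mem L1_simp dinf_le1 prod.inject de_Morgan_conj)
        apply (intro conjI)
        apply arith+
        done
    next
      case 3 show ?thesis
        apply (rule exI[of _ "a1-1"], rule exI[of _ "a2+1"], rule exI[of _ a3])
        apply (insert 3 s nn sn)
        apply (simp only: Fp_mem L1_simp dinf_le1 prod.inject de_Morgan_conj)
        apply (intro conjI)
        apply arith+
        done
    next
      case 4 show ?thesis
        apply (rule exI[of _ "a1"], rule exI[of _ "a2+1"], rule exI[of _ "a3-1"])
        apply (insert 4 s nn sn)
        apply (simp only: Fp_mem L1_simp dinf_le1 prod.inject de_Morgan_conj)
        apply (intro conjI)
        apply arith+
        done
    next
      case 5 show ?thesis
        apply (rule exI[of _ "a1-1"], rule exI[of _ "a2"], rule exI[of _ "a3+1"])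
        apply (insert 5 s nn sn)
        apply (simp only: Fp_mem L1_simp dinf_le1 prod.inject de_Morgan_conj)
        apply (intro conjI)
        apply arith+
        done
    next
      case 6 show ?thesis
        apply (rule exI[of _ "a1"], rule exI[of _ "a2-1"], rule exI[of _ "a3+1"])
        apply (insert 6 s nn sn)
        apply (simp only: Fp_mem L1_simp dinf_le1 prod.inject de_Morgan_conj)
        apply (intro conjI)
        apply arith+
        done
    qed
  qed
  then obtain c1 c2 c3 where c: "(c1,c2,c3) \<in> Fp n" "(c1,c2,c3) \<noteq> (a1,a2,a3)" "dinf (a1,a2,a3) (c1,c2,c3) \<le> 1"
        "L1 (c1,c2,c3) (b1,b2,b3) + 2 = L1 (a1,a2,a3) (b1,b2,b3)" by blast
  have e: "(x, (c1,c2,c3)) \<in> octE n" unfolding u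
    by (rule Fp_edge[OF assms(1)[unfolded u] c(1) c(2)[symmetric] c(3)])
  show ?thesis using c(1,4) e unfolding u w by blast
qed

lemma Fp_path_aux:
  "y \<in> Fp n \<Longrightarrow> \<forall>x. x \<in> Fp n \<longrightarrow> L1 x y = 2 * int k \<longrightarrow> (x,y) \<in> octE n ^^ k"
proof (induction k)
  case 0
  show ?case
  proof (intro allI impI)
    fix x assume x: "x \<in> Fp n" and L: "L1 x y = 2 * int 0"
    have "dinf x y = 0" using Fp_L1[OF x 0] L by simp
    then show "(x,y) \<in> octE n ^^ 0" by (simp add: dinf_0)
  qed
next
  case (Suc k)
  show ?case
  proof (intro allI impI)
    fix x assume x: "x \<in> Fp n" and L: "L1 x y = 2 * int (Suc k)"
    have "dinf x y \<noteq> 0" using Fp_L1[OF x Suc.prems] L by simp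
    then have "x \<noteq> y" by (metis dinf_self)
    then obtain x' where x': "x' \<in> Fp n" "(x,x') \<in> octE n" "L1 x' y + 2 = L1 x y"
      using Fp_step[OF x Suc.prems] by blast
    then have "L1 x' y = 2 * int k" using L by simp
    then have "(x',y) \<in> octE n ^^ k" by (rule Suc.IH[OF Suc.prems, rule_format, OF x'(1)])
    then show "(x,y) \<in> octE n ^^ Suc k" by (rule relpow_Suc_I2[OF x'(2)])
  qed
qed

lemma Fp_path: "x \<in> Fp n \<Longrightarrow> y \<in> Fp n \<Longrightarrow> (x,y) \<in> octE n ^^ dinf x y"
proof -
  assume x: "x \<in> Fp n" and y: "y \<in> Fp n"
  have "\<forall>x'. x' \<in> Fp n \<longrightarrow> L1 x' y = 2 * int (dinf x y) \<longrightarrow> (x',y) \<in> octE n ^^ (dinf x y)"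
    by (rule Fp_path_aux[OF y])
  from this[rule_format, OF x Fp_L1[OF x y]] show ?thesis .
qed


lemma Fp_rtrancl: "x \<in> Fp n \<Longrightarrow> y \<in> Fp n \<Longrightarrow> (x,y) \<in> (octE n)\<^sup>*"
  using Fp_path relpow_imp_rtrancl by blast

lemma face_path: assumes "fl s v \<in> Fp n" "fl s w \<in> Fp n" shows "(v,w) \<in> octE n ^^ dinf v w"
  using fl_relpow[OF Fp_path[OF assms], of s] by simp

lemma face_rtrancl: "fl s v \<in> Fp n \<Longrightarrow> fl s w \<in> Fp n \<Longrightarrow> (v,w) \<in> (octE n)\<^sup>*"
  using face_path relpow_imp_rtrancl by blast

lemma sg0[simp]: "sg p 0 = 0" by (simp add: sg_def)
lemma sgT[simp]: "sg True x = x" by (simp add: sg_def)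
lemma sgF[simp]: "sg False x = - x" by (simp add: sg_def)

lemma rtrancl_sym: "(x,y) \<in> (octE n)\<^sup>* \<Longrightarrow> (y,x) \<in> (octE n)\<^sup>*"
proof (induction rule: rtrancl_induct)
  case base then show ?case by simp
next
  case (step y z)
  then show ?case using octE_sym converse_rtrancl_into_rtrancl by metis
qed

lemma to_corner: assumes "v \<in> octV n" shows "(v, (int n,0,0)) \<in> (octE n)\<^sup>*"
proof -
  obtain s where s: "fl s v \<in> Fp n" using V_face[OF assms] by blast
  obtain p q r where pqr: "s = (p,q,r)" by (cases s) auto
  have cs: "(int n, 0, 0) \<in> Fp n" by simp
  have "fl s (fl s (int n,0,0)) \<in> Fp n" using cs by simp
  then have 1: "(v, fl s (int n,0,0)) \<in> (octE n)\<^sup>*" using face_rtrancl[OF s] by blast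
  show ?thesis
  proof (cases p)
    case True
    then show ?thesis using 1 pqr by simp
  next
    case False
    then have v1: "fl s (int n,0,0) = (- int n, 0, 0)" using pqr by simp
    have "fl (False,True,True) (- int n, 0, 0) \<in> Fp n" "fl (False,True,True) (0, int n, 0) \<in> Fp n"
      by simp_all
    then have 2: "((- int n, 0, 0), (0, int n, 0)) \<in> (octE n)\<^sup>*" by (rule face_rtrancl)
    have 3: "((0, int n, 0), (int n, 0, 0)) \<in> (octE n)\<^sup>*" by (rule Fp_rtrancl) simp_all
    show ?thesis using 1 2 3 v1 by (metis rtrancl_trans)
  qed
qed

lemma connected: assumes "v \<in> octV n" "w \<in> octV n" shows "\<exists>k. (v,w) \<in> octE n ^^ k"
proof -
  have "(v,w) \<in> (octE n)\<^sup>*" using to_corner[OF assms(1)] rtrancl_sym[OF to_corner[OF assms(2)]]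
    by (rule rtrancl_trans)
  then show ?thesis using rtrancl_power by blast
qed

lemma octd_path: assumes "v \<in> octV n" "w \<in> octV n" shows "(v,w) \<in> octE n ^^ octd n v w"
  unfolding octd_def using connected[OF assms] by (rule LeastI_ex)

lemma dinf_le_octd: assumes "v \<in> octV n" "w \<in> octV n" shows "dinf v w \<le> octd n v w"
  using relpow_dinf[OF octd_path[OF assms]] .

lemma octd_le_face: assumes "fl s v \<in> Fp n" "fl s w \<in> Fp n" shows "octd n v w \<le> dinf v w"
  unfolding octd_def using face_path[OF assms] by (rule Least_le)

lemma finite_V: "finite (octV n)"
proof -
  have "octV n \<subseteq> {-int n..int n} \<times> {-int n..int n} \<times> {-int n..int n}"
    by (auto simp: octV_def)
  then show ?thesis by (rule finite_subset) simp
qed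


lemma abel:
  fixes g :: "nat \<Rightarrow> real" and f :: "'a \<Rightarrow> nat"
  assumes A: "finite A" and f: "\<And>w. w \<in> A \<Longrightarrow> 1 \<le> f w \<and> f w \<le> N"
  shows "(\<Sum>w\<in>A. g (f w)) = (\<Sum>k=1..N. (g k - g (Suc k)) * card {w\<in>A. f w \<le> k}) + g (Suc N) * card A"
proof -
  have tel: "g (f w) = (\<Sum>k\<in>{1..N}. if f w \<le> k then g k - g (Suc k) else 0) + g (Suc N)" if w: "w \<in> A" for w
  proof -
    let ?m = "f w"
    have "(\<Sum>k\<in>{1..N}. if ?m \<le> k then g k - g (Suc k) else 0) = (\<Sum>k\<in>{k\<in>{1..N}. ?m \<le> k}. g k - g (Suc k))"
      by (rule sum.inter_filter[symmetric]) simp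
    also have "{k\<in>{1..N}. ?m \<le> k} = {?m..N}" using f[OF w] by auto
    also have "(\<Sum>k\<in>{?m..N}. g k - g (Suc k)) = - (\<Sum>k\<in>{?m..N}. g (Suc k) - g k)"
      by (simp add: sum_negf[symmetric])
    also have "(\<Sum>k\<in>{?m..N}. g (Suc k) - g k) = g (Suc N) - g ?m"
      using f[OF w] by (intro sum_Suc_diff) simp
    finally show ?thesis by simp
  qed
  have "(\<Sum>w\<in>A. g (f w)) = (\<Sum>w\<in>A. (\<Sum>k\<in>{1..N}. if f w \<le> k then g k - g (Suc k) else 0) + g (Suc N))"
    using tel by (rule sum.cong[OF refl])
  also have "\<dots> = (\<Sum>w\<in>A. \<Sum>k\<in>{1..N}. if f w \<le> k then g k - g (Suc k) else 0) + g (Suc N) * card A"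
    by (simp add: sum.distrib)
  also have "(\<Sum>w\<in>A. \<Sum>k\<in>{1..N}. if f w \<le> k then g k - g (Suc k) else 0)
      = (\<Sum>k\<in>{1..N}. \<Sum>w\<in>A. if f w \<le> k then g k - g (Suc k) else 0)"
    by (rule sum.swap)
  also have "\<dots> = (\<Sum>k=1..N. (g k - g (Suc k)) * card {w\<in>A. f w \<le> k})"
  proof (rule sum.cong[OF refl])
    fix k
    have "(\<Sum>w\<in>A. if f w \<le> k then g k - g (Suc k) else 0) = (\<Sum>w\<in>{w\<in>A. f w \<le> k}. g k - g (Suc k))"
      using A by (rule sum.inter_filter[symmetric])
    also have "\<dots> = (g k - g (Suc k)) * card {w\<in>A. f w \<le> k}" by simp
    finally show "(\<Sum>w\<in>A. if f w \<le> k then g k - g (Suc k) else 0) = (g k - g (Suc k)) * card {w\<in>A. f w \<le> k}" .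
  qed
  finally show ?thesis .
qed

lemma parts:
  fixes g b :: "nat \<Rightarrow> real"
  shows "(\<Sum>k=1..N. (g k - g (Suc k)) * b k) + g (Suc N) * b N = g 1 * b 0 + (\<Sum>k=1..N. g k * (b k - b (k - 1)))"
proof (induction N)
  case 0 then show ?case by simp
next
  case (Suc N)
  have "(\<Sum>k=1..Suc N. (g k - g (Suc k)) * b k) + g (Suc (Suc N)) * b (Suc N)
      = ((\<Sum>k=1..N. (g k - g (Suc k)) * b k) + g (Suc N) * b N) + g (Suc N) * (b (Suc N) - b N)"
    by (simp add: algebra_simps)
  also have "\<dots> = g 1 * b 0 + (\<Sum>k=1..Suc N. g k * (b k - b (k - 1)))"
    using Suc by simp
  finally show ?case .
qed

lemma abel_lower:
  fixes g b :: "nat \<Rightarrow> real" and f :: "'a \<Rightarrow> nat"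
  assumes A: "finite A" and fb: "\<And>w. w \<in> A \<Longrightarrow> 1 \<le> f w \<and> f w \<le> N"
    and mono: "\<And>k. 1 \<le> k \<Longrightarrow> g (Suc k) \<le> g k" and nn: "\<And>k. 0 \<le> g k"
    and cnt: "\<And>k. 1 \<le> k \<Longrightarrow> k \<le> N \<Longrightarrow> b k \<le> card {w\<in>A. f w \<le> k}"
  shows "(\<Sum>k=1..N. (g k - g (Suc k)) * b k) \<le> (\<Sum>w\<in>A. g (f w))"
proof -
  have "(\<Sum>k=1..N. (g k - g (Suc k)) * b k) \<le> (\<Sum>k=1..N. (g k - g (Suc k)) * card {w\<in>A. f w \<le> k})"
    by (intro sum_mono mult_left_mono) (auto simp: cnt mono)
  also have "\<dots> \<le> (\<Sum>k=1..N. (g k - g (Suc k)) * card {w\<in>A. f w \<le> k}) + g (Suc N) * card A"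
    using nn by simp
  also have "\<dots> = (\<Sum>w\<in>A. g (f w))" using abel[of A f N g, OF A fb] by simp
  finally show ?thesis .
qed

lemma abel_upper:
  fixes g b :: "nat \<Rightarrow> real" and f :: "'a \<Rightarrow> nat"
  assumes A: "finite A" and fb: "\<And>w. w \<in> A \<Longrightarrow> 1 \<le> f w \<and> f w \<le> N"
    and mono: "\<And>k. 1 \<le> k \<Longrightarrow> g (Suc k) \<le> g k" and nn: "\<And>k. 0 \<le> g k"
    and cnt: "\<And>k. k \<le> N \<Longrightarrow> card {w\<in>A. f w \<le> k} \<le> b k"
  shows "(\<Sum>w\<in>A. g (f w)) \<le> g 1 * b 0 + (\<Sum>k=1..N. g k * (b k - b (k - 1)))"
proof -
  have cA: "card A = card {w\<in>A. f w \<le> N}" using fb by (metis (mono_tags, lifting) Collect_cong Collect_mem_eq)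
  have "(\<Sum>w\<in>A. g (f w)) = (\<Sum>k=1..N. (g k - g (Suc k)) * card {w\<in>A. f w \<le> k}) + g (Suc N) * card A"
    by (rule abel[of A f N g, OF A fb])
  also have "\<dots> \<le> (\<Sum>k=1..N. (g k - g (Suc k)) * b k) + g (Suc N) * b N"
    using cA cnt[of N] nn[of "Suc N"]
    by (intro add_mono sum_mono mult_left_mono) (auto simp: cnt mono)
  also have "\<dots> = g 1 * b 0 + (\<Sum>k=1..N. g k * (b k - b (k - 1)))" by (rule parts)
  finally show ?thesis .
qed


lemma dinf_le_iff: "dinf (a1,a2,a3) (b1,b2,b3) \<le> k \<longleftrightarrow> \<bar>a1-b1\<bar> \<le> int k \<and> \<bar>a2-b2\<bar> \<le> int k \<and> \<bar>a3-b3\<bar> \<le> int k"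
  by (simp only: dinf_simp nat_le_iff max.bounded_iff)

lemma tri_sum: "2 * (\<Sum>i=0..k. Suc (k - i)) = (k+1)*(k+2)"
proof -
  have "(\<Sum>i=0..k. Suc (k - i)) = (\<Sum>i=0..k. (\<lambda>i. Suc (k - i)) (k + 0 - i))"
    by (rule sum.atLeastAtMost_rev)
  also have "\<dots> = (\<Sum>i=0..k. i + 1)" by (intro sum.cong) auto
  also have "\<dots> = (\<Sum>i=0..k. i) + (k+1)" by (simp only: sum.distrib) simp
  finally have "2 * (\<Sum>i=0..k. Suc (k - i)) = 2 * (\<Sum>i=0..k. i) + 2*(k+1)" by simp
  also have "2 * (\<Sum>i=0..k. i) = k * (k+1)" using double_gauss_sum[of k, where 'a=nat] by simp
  finally show ?thesis by (simp add: algebra_simps)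
qed

lemma tri_card: "2 * card {p::nat\<times>nat. fst p + snd p \<le> k} = (k+1)*(k+2)"
proof -
  have "{p::nat\<times>nat. fst p + snd p \<le> k} = Sigma {0..k} (\<lambda>i. {0..k-i})" by auto
  then have "card {p::nat\<times>nat. fst p + snd p \<le> k} = (\<Sum>i\<in>{0..k}. card {0..k-i})"
    by (simp add: card_SigmaI)
  also have "\<dots> = (\<Sum>i=0..k. Suc (k - i))" by simp
  finally show ?thesis using tri_sum by simp
qed

lemma Fp_finite: "finite (Fp n)"
  using finite_V Fp_V by (meson finite_subset subsetI)

lemma Fp_ball: assumes x: "x \<in> Fp n" and k: "k \<le> n"
  shows "(k+1)*(k+2) \<le> 2 * card {y\<in>Fp n. dinf x y \<le> k}"
proof -
  obtain a1 a2 a3 where xa: "x = (a1,a2,a3)" by (cases x) auto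
  have a: "a1 \<ge> 0" "a2 \<ge> 0" "a3 \<ge> 0" "a1+a2+a3 = int n" using x xa by auto
  define c1 where "c1 = min a1 (int n - int k)"
  define c2 where "c2 = min a2 (int n - int k - c1)"
  define c3 where "c3 = int n - int k - c1 - c2"
  have c: "0 \<le> c1" "c1 \<le> a1" "0 \<le> c2" "c2 \<le> a2" "0 \<le> c3" "c3 \<le> a3" "c1+c2+c3 = int n - int k"
    using a k unfolding c1_def c2_def c3_def by auto
  define \<phi> where "\<phi> = (\<lambda>p::nat\<times>nat. (c1 + int (fst p), c2 + int (snd p), c3 + int k - int (fst p) - int (snd p)))"
  let ?T = "{p::nat\<times>nat. fst p + snd p \<le> k}"
  have sub: "\<phi> ` ?T \<subseteq> {y\<in>Fp n. dinf x y \<le> k}"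
  proof
    fix y assume "y \<in> \<phi> ` ?T"
    then obtain i j where ij: "i + j \<le> k" "y = \<phi> (i,j)" by auto
    have "y \<in> Fp n" using ij c unfolding \<phi>_def by auto
    moreover have "dinf x y \<le> k" using ij c a unfolding \<phi>_def xa dinf_le_iff by auto
    ultimately show "y \<in> {y\<in>Fp n. dinf x y \<le> k}" by simp
  qed
  have inj: "inj_on \<phi> ?T" unfolding \<phi>_def by (auto simp: inj_on_def)
  have fin: "finite {y\<in>Fp n. dinf x y \<le> k}" using Fp_finite by simp
  have "card ?T \<le> card {y\<in>Fp n. dinf x y \<le> k}"
    using card_inj_on_le[OF inj sub fin] .
  then show ?thesis using tri_card[of k] by simp
qed

lemma card_int_interval: "card {a - int k..a + int k} = 2*k+1"
  by simp

lemma V_ball: assumes v: "v \<in> octV n"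
  shows "card {w\<in>octV n. dinf v w \<le> k} \<le> 2 * (2*k+1)^2"
proof -
  obtain a1 a2 a3 where va: "v = (a1,a2,a3)" by (cases v) auto
  define \<pi> where "\<pi> = (\<lambda>w::vtx. (fst w, fst (snd w), 0 \<le> snd (snd w)))"
  let ?B = "{a1 - int k..a1 + int k} \<times> {a2 - int k..a2 + int k} \<times> (UNIV :: bool set)"
  have inj: "inj_on \<pi> {w\<in>octV n. dinf v w \<le> k}"
  proof (rule inj_onI)
    fix w w' assume w: "w \<in> {w\<in>octV n. dinf v w \<le> k}" and w': "w' \<in> {w\<in>octV n. dinf v w \<le> k}"
      and e: "\<pi> w = \<pi> w'"
    obtain b1 b2 b3 where wb: "w = (b1,b2,b3)" by (cases w) auto
    obtain d1 d2 d3 where wd: "w' = (d1,d2,d3)" by (cases w') auto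
    have "b1 = d1" "b2 = d2" "(0 \<le> b3) = (0 \<le> d3)" using e wb wd unfolding \<pi>_def by auto
    moreover have "\<bar>b1\<bar>+\<bar>b2\<bar>+\<bar>b3\<bar> = int n" "\<bar>d1\<bar>+\<bar>d2\<bar>+\<bar>d3\<bar> = int n" using w w' wb wd by auto
    ultimately have "b3 = d3" by arith
    then show "w = w'" using wb wd \<open>b1 = d1\<close> \<open>b2 = d2\<close> by simp
  qed
  have sub: "\<pi> ` {w\<in>octV n. dinf v w \<le> k} \<subseteq> ?B"
  proof
    fix y assume "y \<in> \<pi> ` {w\<in>octV n. dinf v w \<le> k}"
    then obtain w where w: "w \<in> octV n" "dinf v w \<le> k" "y = \<pi> w" by auto
    obtain b1 b2 b3 where wb: "w = (b1,b2,b3)" by (cases w) auto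
    have "\<bar>a1-b1\<bar> \<le> int k" "\<bar>a2-b2\<bar> \<le> int k" using w(2) unfolding va wb dinf_le_iff by auto
    then show "y \<in> ?B" using w(3) wb unfolding \<pi>_def by auto
  qed
  have "card {w\<in>octV n. dinf v w \<le> k} \<le> card ?B"
    using card_inj_on_le[OF inj sub] by simp
  also have "card ?B = (2*k+1) * ((2*k+1) * 2)"
  proof -
    have e: "nat (2 * int k + 1) = 2*k+1" by linarith
    show ?thesis by (simp add: card_cartesian_product e)
  qed
  finally show ?thesis by (simp add: power2_eq_square)
qed

lemma V_ball': assumes v: "v \<in> octV n"
  shows "real (card {w\<in>octV n - {v}. dinf v w \<le> k}) \<le> 8 * real k ^ 2 + 8 * real k + 1"
proof -
  have "{w\<in>octV n - {v}. dinf v w \<le> k} = {w\<in>octV n. dinf v w \<le> k} - {v}" by auto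
  moreover have "v \<in> {w\<in>octV n. dinf v w \<le> k}" using v by simp
  moreover have "finite {w\<in>octV n. dinf v w \<le> k}" using finite_V by simp
  ultimately have "card {w\<in>octV n - {v}. dinf v w \<le> k} = card {w\<in>octV n. dinf v w \<le> k} - 1"
    by simp
  then have "card {w\<in>octV n - {v}. dinf v w \<le> k} + 1 \<le> 2 * (2*k+1)^2"
  proof -
    have "card {w\<in>octV n. dinf v w \<le> k} \<ge> 1"
      using \<open>v \<in> {w\<in>octV n. dinf v w \<le> k}\<close> \<open>finite {w\<in>octV n. dinf v w \<le> k}\<close>
      by (metis One_nat_def Suc_leI card_gt_0_iff empty_iff)
    then show ?thesis using V_ball[OF v, of k] \<open>card {w\<in>octV n - {v}. dinf v w \<le> k} = _\<close> by linarith
  qed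
  then have "real (card {w\<in>octV n - {v}. dinf v w \<le> k}) + 1 \<le> 2 * (2*real k+1)^2"
    by (metis (mono_tags, lifting) of_nat_1 of_nat_add of_nat_le_iff of_nat_mult of_nat_numeral of_nat_power)
  then show ?thesis by (simp add: power2_eq_square algebra_simps)
qed


lemma Fp_dinf_le: assumes "x \<in> Fp n" "y \<in> Fp n" shows "dinf x y \<le> n"
proof -
  obtain a1 a2 a3 where u: "x = (a1,a2,a3)" by (cases x) auto
  obtain b1 b2 b3 where w: "y = (b1,b2,b3)" by (cases y) auto
  show ?thesis using assms unfolding u w dinf_le_iff by auto
qed

lemma term_lower_r:
  fixes r :: real assumes r: "r \<ge> 1"
  shows "(1 / r ^ 2 - 1 / (r+1) ^ 2) * (r * (r + 3) / 2) \<ge> 1 / r + (1 / r - 1 / (r+1))"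
proof -
  define q where "q = r + 1"
  have r0: "r > 0" "q > 0" using r by (auto simp: q_def)
  have "(1 / r ^ 2 - 1 / q ^ 2) * (r * (r + 3) / 2) - (1 / r + (1 / r - 1 / q))
     = ((q^2 - r^2) * (r+3) - 2 * q * (2 * q - r)) / (2 * r * q^2)"
    using r0 by (simp add: field_simps power2_eq_square)
  also have "(q^2 - r^2) * (r+3) - 2 * q * (2 * q - r) = r - 1"
    unfolding q_def by (simp add: algebra_simps power2_eq_square)
  finally have "(1 / r ^ 2 - 1 / q ^ 2) * (r * (r + 3) / 2) - (1 / r + (1 / r - 1 / q)) = (r - 1) / (2 * r * q^2)" .
  moreover have "(r - 1) / (2 * r * q^2) \<ge> 0" using r0 r by simp
  ultimately show ?thesis unfolding q_def by linarith
qed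

lemma term_lower:
  fixes k :: nat assumes "k \<ge> 1"
  shows "(1 / real k ^ 2 - 1 / real (Suc k) ^ 2) * (real k * (real k + 3) / 2)
      \<ge> 1 / real k + (1 / real k - 1 / real (Suc k))"
  using term_lower_r[of "real k"] assms by (simp add: add.commute)

lemma sum_lower: "(\<Sum>k=1..n. (1 / real k ^ 2 - 1 / real (Suc k) ^ 2) * (real k * (real k + 3) / 2))
   \<ge> harm n + 1 - 1 / real (Suc n)"
proof (induction n)
  case 0 then show ?case by (simp add: harm_def)
next
  case (Suc n)
  have "(\<Sum>k=1..Suc n. (1 / real k ^ 2 - 1 / real (Suc k) ^ 2) * (real k * (real k + 3) / 2))
     = (\<Sum>k=1..n. (1 / real k ^ 2 - 1 / real (Suc k) ^ 2) * (real k * (real k + 3) / 2))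
       + (1 / real (Suc n) ^ 2 - 1 / real (Suc (Suc n)) ^ 2) * (real (Suc n) * (real (Suc n) + 3) / 2)"
    by simp
  also have "\<dots> \<ge> harm n + 1 - 1 / real (Suc n) + (1 / real (Suc n) + (1 / real (Suc n) - 1 / real (Suc (Suc n))))"
    using Suc.IH term_lower[of "Suc n"] by linarith
  moreover have "harm (Suc n) = harm n + 1 / real (Suc n)" by (simp add: harm_Suc inverse_eq_divide)
  ultimately show ?case by linarith
qed

lemma Fp_lower: assumes x: "x \<in> Fp n" and n: "n \<ge> 1"
  shows "(\<Sum>y\<in>Fp n - {x}. 1 / real (dinf x y) ^ 2) \<ge> ln (real n + 1) + 1/2"
proof -
  let ?A = "Fp n - {x}"
  have fA: "finite ?A" using Fp_finite by simp
  have f: "\<And>y. y \<in> ?A \<Longrightarrow> 1 \<le> dinf x y \<and> dinf x y \<le> n"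
    using Fp_dinf_le[OF x] dinf_0 by (metis DiffE Fp_dinf_le One_nat_def Suc_leI insertI1 neq0_conv x)
  have cnt: "real k * (real k + 3) / 2 \<le> real (card {y\<in>?A. dinf x y \<le> k})" if "1 \<le> k" "k \<le> n" for k
  proof -
    have e: "{y\<in>?A. dinf x y \<le> k} = {y\<in>Fp n. dinf x y \<le> k} - {x}" by auto
    have "x \<in> {y\<in>Fp n. dinf x y \<le> k}" using x by simp
    then have "card {y\<in>?A. dinf x y \<le> k} = card {y\<in>Fp n. dinf x y \<le> k} - 1"
      unfolding e using Fp_finite by simp
    moreover have "(k+1)*(k+2) \<le> 2 * card {y\<in>Fp n. dinf x y \<le> k}" using Fp_ball[OF x that(2)] .
    ultimately have "k*(k+3) \<le> 2 * card {y\<in>?A. dinf x y \<le> k}" by (simp add: algebra_simps)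
    then have "real (k*(k+3)) \<le> real (2 * card {y\<in>?A. dinf x y \<le> k})" by (simp only: of_nat_le_iff)
    then show ?thesis by simp
  qed
  have "(\<Sum>k=1..n. (1 / real k ^ 2 - 1 / real (Suc k) ^ 2) * (real k * (real k + 3) / 2))
      \<le> (\<Sum>y\<in>?A. 1 / real (dinf x y) ^ 2)"
    using abel_lower[of ?A "dinf x" n "\<lambda>k. 1 / real k ^ 2" "\<lambda>k. real k * (real k + 3) / 2", OF fA f]
      cnt by (auto simp: frac_le power_mono)
  moreover have "harm n + 1 - 1 / real (Suc n) \<ge> ln (real n + 1) + 1/2"
  proof -
    have "1 / real (Suc n) \<le> 1/2" using n by (simp add: field_simps)
    then show ?thesis using ln_le_harm[of n] by linarith
  qed
  ultimately show ?thesis using sum_lower[of n] by linarith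
qed


lemma V_lower: assumes v: "v \<in> octV n" and n: "n \<ge> 1"
  shows "(\<Sum>w\<in>octV n - {v}. 1 / real (octd n v w) ^ 2) \<ge> ln (real n + 1) + 1/2"
proof -
  obtain s where x: "fl s v \<in> Fp n" using V_face[OF v] by blast
  let ?x = "fl s v"
  let ?B = "fl s ` (Fp n - {?x})"
  have sub: "?B \<subseteq> octV n - {v}"
  proof
    fix w assume "w \<in> ?B"
    then obtain y where y: "y \<in> Fp n" "y \<noteq> ?x" "w = fl s y" by auto
    have "fl s w \<in> octV n" using y Fp_V by simp
    then have "w \<in> octV n" by simp
    moreover have "w \<noteq> v" using y by auto
    ultimately show "w \<in> octV n - {v}" by simp
  qed
  have "(\<Sum>w\<in>?B. 1 / real (octd n v w) ^ 2) \<le> (\<Sum>w\<in>octV n - {v}. 1 / real (octd n v w) ^ 2)"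
    by (rule sum_mono2) (use sub finite_V in auto)
  moreover have "(\<Sum>w\<in>?B. 1 / real (octd n v w) ^ 2) = (\<Sum>y\<in>Fp n - {?x}. 1 / real (octd n v (fl s y)) ^ 2)"
    by (subst sum.reindex) (auto simp: inj_on_def)
  moreover have "(\<Sum>y\<in>Fp n - {?x}. 1 / real (octd n v (fl s y)) ^ 2) = (\<Sum>y\<in>Fp n - {?x}. 1 / real (dinf ?x y) ^ 2)"
  proof (rule sum.cong[OF refl])
    fix y assume y: "y \<in> Fp n - {?x}"
    have fy: "fl s (fl s y) \<in> Fp n" using y by simp
    have "octd n v (fl s y) \<le> dinf v (fl s y)" by (rule octd_le_face[OF x fy])
    moreover have "dinf v (fl s y) \<le> octd n v (fl s y)"
      using dinf_le_octd[OF v, of "fl s y"] y Fp_V by simp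
    moreover have "dinf v (fl s y) = dinf ?x y" using fl_dinf[of s v "fl s y"] by simp
    ultimately show "1 / real (octd n v (fl s y)) ^ 2 = 1 / real (dinf ?x y) ^ 2" by simp
  qed
  ultimately show ?thesis using Fp_lower[OF x n] by linarith
qed

definition LL :: "nat \<Rightarrow> real" where "LL n = ln (real n + 1) + 1/2"

lemma LL_pos: "LL n > 0"
proof -
  have "ln (real n + 1) \<ge> 0" by simp
  then show ?thesis unfolding LL_def by linarith
qed

lemma Zc_bounds: assumes v: "v \<in> octV n" and n: "n \<ge> 1"
  shows "Zc n v \<ge> 0" "Zc n v \<le> 1 / LL n" "Zc n v * (\<Sum>w\<in>octV n - {v}. 1 / real (octd n v w) ^ 2) = 1"
proof -
  let ?S = "\<Sum>w\<in>octV n - {v}. 1 / real (octd n v w) ^ 2"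
  have S: "?S \<ge> LL n" using V_lower[OF v n] unfolding LL_def .
  then have Sp: "?S > 0" using LL_pos[of n] by linarith
  show "Zc n v \<ge> 0" unfolding Zc_def using Sp by simp
  show "Zc n v \<le> 1 / LL n" unfolding Zc_def using S LL_pos[of n]
    by (simp add: inverse_eq_divide frac_le)
  show "Zc n v * ?S = 1" unfolding Zc_def using Sp by simp
qed

lemma pmf_choice: assumes v: "v \<in> octV n" and n: "n \<ge> 1"
  shows "pmf (choice_pmf n v) w = (if w \<in> octV n - {v} then Zc n v * (1 / (real (octd n v w))\<^sup>2) else 0)"
proof -
  define f where "f = (\<lambda>w. if w \<in> octV n - {v} then Zc n v * (1 / (real (octd n v w))\<^sup>2) else 0)"
  have nn: "\<And>w. 0 \<le> f w" unfolding f_def using Zc_bounds(1)[OF v n] by simp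
  have "(\<integral>\<^sup>+x. ennreal (f x) \<partial>count_space UNIV) = (\<Sum>x\<in>octV n - {v}. ennreal (f x))"
    by (rule nn_integral_count_space') (auto simp: f_def finite_V)
  also have "\<dots> = ennreal (\<Sum>x\<in>octV n - {v}. f x)"
    using nn by (simp add: sum_ennreal)
  also have "(\<Sum>x\<in>octV n - {v}. f x) = Zc n v * (\<Sum>w\<in>octV n - {v}. 1 / real (octd n v w) ^ 2)"
    unfolding f_def by (simp add: sum_distrib_left)
  also have "\<dots> = 1" by (rule Zc_bounds(3)[OF v n])
  finally have int1: "(\<integral>\<^sup>+x. ennreal (f x) \<partial>count_space UNIV) = 1" by simp
  have "pmf (embed_pmf f) w = f w" by (rule pmf_embed_pmf[of f]) (use nn int1 in auto)
  then show ?thesis unfolding choice_pmf_def f_def[symmetric] by (simp add: f_def)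
qed

lemma pmf_choice_le: assumes v: "v \<in> octV n" and n: "n \<ge> 1" and w: "w \<in> octV n" "w \<noteq> v"
  shows "pmf (choice_pmf n v) w \<le> 1 / LL n * (1 / real (dinf v w) ^ 2)"
proof -
  have d1: "dinf v w \<ge> 1" using w dinf_0 by (metis One_nat_def Suc_leI neq0_conv)
  have "dinf v w \<le> octd n v w" using dinf_le_octd[OF v w(1)] .
  then have "1 / real (octd n v w) ^ 2 \<le> 1 / real (dinf v w) ^ 2"
    using d1 by (intro frac_le power_mono) auto
  then have "Zc n v * (1 / real (octd n v w) ^ 2) \<le> 1 / LL n * (1 / real (dinf v w) ^ 2)"
    using Zc_bounds[OF v n] LL_pos[of n] by (intro mult_mono) auto
  then show ?thesis using pmf_choice[OF v n, of w] w by simp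
qed


definition Ev :: "vtx \<Rightarrow> vtx \<Rightarrow> vtx \<Rightarrow> (vtx \<Rightarrow> vtx) set" where
  "Ev u a b = {\<omega>. \<omega> u = a \<and> \<omega> a = b \<and> \<omega> b = u}"

lemma prob_Ev:
  assumes u: "u \<in> octV n" and a: "a \<in> octV n" and b: "b \<in> octV n"
    and d: "u \<noteq> a" "u \<noteq> b" "a \<noteq> b"
  shows "measure_pmf.prob (OSW_space n) (Ev u a b)
       = pmf (choice_pmf n u) a * pmf (choice_pmf n a) b * pmf (choice_pmf n b) u"
proof -
  define B where "B = (\<lambda>x. if x = u then {a} else if x = a then {b} else if x = b then {u} else (UNIV :: vtx set))"
  have e: "Ev u a b = Pi (octV n) B"
  proof (intro set_eqI iffI)
    fix \<omega> assume "\<omega> \<in> Ev u a b"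
    then show "\<omega> \<in> Pi (octV n) B" unfolding Ev_def B_def by (simp add: Pi_iff del: octV_mem)
  next
    fix \<omega> assume h: "\<omega> \<in> Pi (octV n) B"
    have "\<omega> u \<in> B u" "\<omega> a \<in> B a" "\<omega> b \<in> B b" using Pi_mem[OF h] u a b by auto
    then show "\<omega> \<in> Ev u a b" using d unfolding Ev_def B_def by auto
  qed
  have "measure_pmf.prob (OSW_space n) (Ev u a b) = (\<Prod>x\<in>octV n. measure_pmf.prob (choice_pmf n x) (B x))"
    unfolding e OSW_space_def by (rule measure_Pi_pmf_Pi[OF finite_V])
  also have "\<dots> = (\<Prod>x\<in>octV n. if x = u then pmf (choice_pmf n u) a else if x = a then pmf (choice_pmf n a) b
                     else if x = b then pmf (choice_pmf n b) u else 1)"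
    by (intro prod.cong refl) (auto simp: B_def measure_pmf_single)
  also have "\<dots> = pmf (choice_pmf n u) a * pmf (choice_pmf n a) b * pmf (choice_pmf n b) u"
  proof -
    let ?q = "\<lambda>x. if x = u then pmf (choice_pmf n u) a else if x = a then pmf (choice_pmf n a) b
                     else if x = b then pmf (choice_pmf n b) u else 1"
    have V: "octV n = insert u (insert a (insert b (octV n - {u,a,b})))" using u a b by auto
    have f: "finite (octV n - {u,a,b})" using finite_V by simp
    have "(\<Prod>x\<in>octV n - {u,a,b}. ?q x) = 1" by (intro prod.neutral) auto
    then show ?thesis
      by (subst V, subst prod.insert) (use f d in \<open>auto simp: prod.insert\<close>)
  qed
  finally show ?thesis .
qed

lemma E7_subset: "E7 n u \<subseteq> (\<Union>p\<in>Sigma (octV n - {u}) (\<lambda>a. octV n - {u,a}). Ev u (fst p) (snd p))"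
  unfolding E7_def Ev_def type_w_def chooses_def by auto

lemma prob_E7_sum: "measure_pmf.prob (OSW_space n) (E7 n u)
   \<le> (\<Sum>a\<in>octV n - {u}. \<Sum>b\<in>octV n - {u,a}. measure_pmf.prob (OSW_space n) (Ev u a b))"
proof -
  let ?I = "Sigma (octV n - {u}) (\<lambda>a. octV n - {u,a})"
  have fI: "finite ?I" using finite_V by auto
  have "measure_pmf.prob (OSW_space n) (E7 n u) \<le> measure_pmf.prob (OSW_space n) (\<Union>p\<in>?I. Ev u (fst p) (snd p))"
    by (rule measure_pmf.finite_measure_mono[OF E7_subset]) simp
  also have "\<dots> \<le> (\<Sum>p\<in>?I. measure_pmf.prob (OSW_space n) (Ev u (fst p) (snd p)))"
    by (rule measure_pmf.finite_measure_subadditive_finite[OF fI]) simp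
  also have "\<dots> = (\<Sum>a\<in>octV n - {u}. \<Sum>b\<in>octV n - {u,a}. measure_pmf.prob (OSW_space n) (Ev u a b))"
    using finite_V by (subst sum.Sigma) (auto simp: split_def)
  finally show ?thesis .
qed

lemma prob_E7_bound: assumes u: "u \<in> octV n" and n: "n \<ge> 1"
  shows "measure_pmf.prob (OSW_space n) (E7 n u)
   \<le> (1 / LL n)^3 * (\<Sum>a\<in>octV n - {u}. \<Sum>b\<in>octV n - {u,a}.
        1 / real (dinf u a) ^ 2 * (1 / real (dinf a b) ^ 2) * (1 / real (dinf b u) ^ 2))"
proof -
  have "measure_pmf.prob (OSW_space n) (E7 n u)
   \<le> (\<Sum>a\<in>octV n - {u}. \<Sum>b\<in>octV n - {u,a}. measure_pmf.prob (OSW_space n) (Ev u a b))"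
    by (rule prob_E7_sum)
  also have "\<dots> \<le> (\<Sum>a\<in>octV n - {u}. \<Sum>b\<in>octV n - {u,a}.
        (1 / LL n)^3 * (1 / real (dinf u a) ^ 2 * (1 / real (dinf a b) ^ 2) * (1 / real (dinf b u) ^ 2)))"
  proof (intro sum_mono)
    fix a b assume a: "a \<in> octV n - {u}" and b: "b \<in> octV n - {u,a}"
    have p: "measure_pmf.prob (OSW_space n) (Ev u a b)
       = pmf (choice_pmf n u) a * pmf (choice_pmf n a) b * pmf (choice_pmf n b) u"
      using a b u by (intro prob_Ev) auto
    have 1: "pmf (choice_pmf n u) a \<le> 1 / LL n * (1 / real (dinf u a) ^ 2)"
      using a u n by (intro pmf_choice_le) auto
    have 2: "pmf (choice_pmf n a) b \<le> 1 / LL n * (1 / real (dinf a b) ^ 2)"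
      using a b n by (intro pmf_choice_le) auto
    have 3: "pmf (choice_pmf n b) u \<le> 1 / LL n * (1 / real (dinf b u) ^ 2)"
      using b u n by (intro pmf_choice_le) auto
    have "pmf (choice_pmf n u) a * pmf (choice_pmf n a) b * pmf (choice_pmf n b) u
       \<le> (1 / LL n * (1 / real (dinf u a) ^ 2)) * (1 / LL n * (1 / real (dinf a b) ^ 2)) * (1 / LL n * (1 / real (dinf b u) ^ 2))"
      using 1 2 3 LL_pos[of n] by (intro mult_mono mult_nonneg_nonneg) (auto simp: pmf_nonneg)
    also have "\<dots> = (1 / LL n)^3 * (1 / real (dinf u a) ^ 2 * (1 / real (dinf a b) ^ 2) * (1 / real (dinf b u) ^ 2))"
      by (simp add: power3_eq_cube algebra_simps)
    finally show "measure_pmf.prob (OSW_space n) (Ev u a b) \<le> \<dots>" using p by simp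
  qed
  also have "\<dots> = (1 / LL n)^3 * (\<Sum>a\<in>octV n - {u}. \<Sum>b\<in>octV n - {u,a}.
        1 / real (dinf u a) ^ 2 * (1 / real (dinf a b) ^ 2) * (1 / real (dinf b u) ^ 2))"
    by (simp add: sum_distrib_left)
  finally show ?thesis .
qed


lemma tel3: fixes r :: real assumes r: "r \<ge> 1"
  shows "1 / r^3 \<le> 2 / (2*r-1)^2 - 2 / (2*r+1)^2"
proof -
  have p: "2*r-1 > 0" "2*r+1 > 0" "r > 0" using r by auto
  have "2 / (2*r-1)^2 - 2 / (2*r+1)^2 = 2 * ((2*r+1)^2 - (2*r-1)^2) / ((2*r-1)^2 * (2*r+1)^2)"
    using p by (simp add: field_simps)
  also have "\<dots> = 16 * r / ((2*r-1)*(2*r+1))^2"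
    by (simp add: algebra_simps power2_eq_square)
  finally have e: "2 / (2*r-1)^2 - 2 / (2*r+1)^2 = 16 * r / ((2*r-1)*(2*r+1))^2" .
  have "((2*r-1)*(2*r+1))^2 \<le> 16 * r^4"
  proof -
    have "(2*r-1)*(2*r+1) = 4*r^2 - 1" by (simp add: algebra_simps power2_eq_square)
    moreover have "0 \<le> 4*r^2 - 1"
    proof -
      have "1 \<le> r * r" using r by (metis mult_mono' mult_1 zero_le_one)
      then show ?thesis by (simp add: power2_eq_square)
    qed
    moreover have "4*r^2 - 1 \<le> 4*r^2" by simp
    ultimately have "((2*r-1)*(2*r+1))^2 \<le> (4*r^2)^2" by (metis power_mono)
    moreover have "(4*r^2)^2 = 16 * r^4" by (simp add: eval_nat_numeral)
    ultimately show ?thesis by simp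
  qed
  then have "1 / r^3 \<le> 16 * r / ((2*r-1)*(2*r+1))^2"
  proof -
    have pos: "((2*r-1)*(2*r+1))^2 > 0" using p by simp
    have "1 / r^3 = 16 * r / (16 * r^4)" using p by (simp add: field_simps power_def)
    also have "\<dots> \<le> 16 * r / ((2*r-1)*(2*r+1))^2"
      using \<open>((2*r-1)*(2*r+1))^2 \<le> 16 * r^4\<close> pos p by (intro divide_left_mono) auto
    finally show ?thesis .
  qed
  then show ?thesis using e by simp
qed

definition c3 :: "nat \<Rightarrow> real" where "c3 k = 2 / (2 * real k - 1)^2"

lemma tel3n: "k \<ge> 1 \<Longrightarrow> 1 / real k ^ 3 \<le> c3 k - c3 (Suc k)"
  unfolding c3_def using tel3[of "real k"] by (simp add: algebra_simps)

lemma tail3: "(\<Sum>x=m..N. 1 / real x ^ 3) \<le> c3 m" if "m \<ge> 1" for m N :: nat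
proof (cases "m \<le> N")
  case True
  have "(\<Sum>x=m..N. 1 / real x ^ 3) \<le> (\<Sum>x=m..N. c3 x - c3 (Suc x))"
    using that by (intro sum_mono tel3n) auto
  also have "\<dots> = - (\<Sum>x=m..N. c3 (Suc x) - c3 x)" by (simp add: sum_negf[symmetric])
  also have "(\<Sum>x=m..N. c3 (Suc x) - c3 x) = c3 (Suc N) - c3 m" using True by (intro sum_Suc_diff) simp
  finally have "(\<Sum>x=m..N. 1 / real x ^ 3) \<le> c3 m - c3 (Suc N)" by simp
  moreover have "c3 (Suc N) \<ge> 0" unfolding c3_def by simp
  ultimately show ?thesis by linarith
next
  case False
  then show ?thesis unfolding c3_def by simp
qed

lemma zeta3_partial: "(\<Sum>k=1..N. 1 / real k ^ 3) \<le> 241 / 200"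
proof (cases "N \<le> 2")
  case True
  then have "N = 0 \<or> N = 1 \<or> N = 2" by auto
  then show ?thesis by (auto simp: numeral_2_eq_2)
next
  case False
  have "{1..N} = {1..2} \<union> {3..N}" using False by auto
  then have "(\<Sum>k=1..N. 1 / real k ^ 3) = (\<Sum>k=1..2. 1 / real k ^ 3) + (\<Sum>k=3..N. 1 / real k ^ 3)"
    by (simp add: sum.union_disjoint)
  also have "(\<Sum>k=1..2. 1 / real k ^ 3) = 9/8" by (simp add: numeral_2_eq_2)
  also have "(\<Sum>k=3..N. 1 / real k ^ 3) \<le> c3 3" by (rule tail3) simp
  also have "c3 3 = 2/25" unfolding c3_def by simp
  finally show ?thesis by simp
qed


definition tt :: "nat \<Rightarrow> nat \<Rightarrow> real" where
  "tt x k = 1 / (real x * real k * real (max x k) ^ 2)"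

definition DD :: "nat \<Rightarrow> real" where
  "DD N = (\<Sum>x=1..N. \<Sum>k=1..N. tt x k)"

lemma tt_sym: "tt x k = tt k x"
  unfolding tt_def by (simp add: max.commute mult.commute)

lemma DD_split: "DD N = 2 * (\<Sum>x=1..N. \<Sum>k=1..N. if k < x then tt x k else 0) + (\<Sum>x=1..N. tt x x)"
proof -
  let ?I = "{1..N}"
  have "DD N = (\<Sum>x\<in>?I. \<Sum>k\<in>?I. (if k < x then tt x k else 0) + (if x < k then tt x k else 0) + (if k = x then tt x k else 0))"
    unfolding DD_def by (intro sum.cong refl) auto
  also have "\<dots> = (\<Sum>x\<in>?I. \<Sum>k\<in>?I. if k < x then tt x k else 0) + (\<Sum>x\<in>?I. \<Sum>k\<in>?I. if x < k then tt x k else 0)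
      + (\<Sum>x\<in>?I. \<Sum>k\<in>?I. if k = x then tt x k else 0)"
    by (simp add: sum.distrib)
  also have "(\<Sum>x\<in>?I. \<Sum>k\<in>?I. if x < k then tt x k else 0) = (\<Sum>k\<in>?I. \<Sum>x\<in>?I. if x < k then tt x k else 0)"
    by (rule sum.swap)
  also have "\<dots> = (\<Sum>x\<in>?I. \<Sum>k\<in>?I. if k < x then tt x k else 0)"
    by (intro sum.cong refl) (simp add: tt_sym)
  also have "(\<Sum>x\<in>?I. \<Sum>k\<in>?I. if k = x then tt x k else 0) = (\<Sum>x\<in>?I. tt x x)"
    by (intro sum.cong refl) (simp add: sum.delta)
  finally show ?thesis by simp
qed

lemma lower_part: "(\<Sum>x=1..N. \<Sum>k=1..N. if k < x then tt x k else 0) \<le> (\<Sum>k=1..N. 2 / (real k * (2 * real k + 1)^2))"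
proof -
  let ?I = "{1..N}"
  have "(\<Sum>x\<in>?I. \<Sum>k\<in>?I. if k < x then tt x k else 0) = (\<Sum>k\<in>?I. \<Sum>x\<in>?I. if k < x then tt x k else 0)"
    by (rule sum.swap)
  also have "\<dots> \<le> (\<Sum>k\<in>?I. 2 / (real k * (2 * real k + 1)^2))"
  proof (rule sum_mono)
    fix k assume k: "k \<in> ?I"
    have "(\<Sum>x\<in>?I. if k < x then tt x k else 0) = (\<Sum>x\<in>?I. if k < x then 1 / real k * (1 / real x ^ 3) else 0)"
      by (intro sum.cong refl) (auto simp: tt_def max_def power_def field_simps)
    also have "\<dots> = (\<Sum>x\<in>{x\<in>?I. k < x}. 1 / real k * (1 / real x ^ 3))"
      by (rule sum.inter_filter[symmetric]) simp
    also have "{x\<in>?I. k < x} = {Suc k..N}" using k by auto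
    also have "(\<Sum>x\<in>{Suc k..N}. 1 / real k * (1 / real x ^ 3)) = 1 / real k * (\<Sum>x=Suc k..N. 1 / real x ^ 3)"
      by (simp add: sum_distrib_left)
    also have "\<dots> \<le> 1 / real k * c3 (Suc k)"
      by (intro mult_left_mono tail3) auto
    also have "\<dots> = 2 / (real k * (2 * real k + 1)^2)" unfolding c3_def by (simp add: algebra_simps)
    finally show "(\<Sum>x\<in>?I. if k < x then tt x k else 0) \<le> 2 / (real k * (2 * real k + 1)^2)" .
  qed
  finally show ?thesis .
qed

definition phi :: "nat \<Rightarrow> real" where "phi k = 1 / real k ^ 4 + 4 / (real k * (2 * real k + 1)^2)"

lemma DD_phi: "DD N \<le> (\<Sum>k=1..N. phi k)"
proof -
  have "(\<Sum>x=1..N. tt x x) = (\<Sum>k=1..N. 1 / real k ^ 4)"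
    by (intro sum.cong refl) (simp add: tt_def power_def)
  then have "DD N \<le> 2 * (\<Sum>k=1..N. 2 / (real k * (2 * real k + 1)^2)) + (\<Sum>k=1..N. 1 / real k ^ 4)"
    using DD_split[of N] lower_part[of N] by linarith
  also have "\<dots> = (\<Sum>k=1..N. phi k)"
    unfolding phi_def by (simp add: sum.distrib sum_distrib_left)
  finally show ?thesis .
qed

lemma phi_le: assumes "k \<ge> 4" shows "phi k \<le> 5/4 * (1 / real k ^ 3)"
proof -
  have k: "real k \<ge> 4" using assms by simp
  have a: "1 / real k ^ 4 \<le> 1/4 * (1 / real k ^ 3)"
  proof -
    have "4 * real k ^ 3 \<le> real k ^ 4" using k by (simp add: power_def)
    then show ?thesis using k by (simp add: field_simps)
  qed
  have b: "4 / (real k * (2 * real k + 1)^2) \<le> 1 / real k ^ 3"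
  proof -
    have "4 * real k ^ 2 \<le> (2 * real k + 1)^2" using k by (simp add: power2_eq_square algebra_simps)
    then have "4 * real k ^ 3 \<le> real k * (2 * real k + 1)^2" using k
      by (simp add: power_def)
    then show ?thesis using k by (simp add: field_simps)
  qed
  show ?thesis unfolding phi_def using a b by simp
qed

lemma phi_nonneg: "phi k \<ge> 0" unfolding phi_def by simp

lemma phi_sum: "(\<Sum>k=1..N. phi k) \<le> 42/25"
proof -
  have "(\<Sum>k=1..N. phi k) \<le> (\<Sum>k\<in>{1..3} \<union> {4..N}. phi k)"
    by (rule sum_mono2) (auto simp: phi_nonneg)
  also have "\<dots> = (\<Sum>k\<in>{1..3}. phi k) + (\<Sum>k\<in>{4..N}. phi k)"
    by (rule sum.union_disjoint) auto
  also have "(\<Sum>k\<in>{4..N}. phi k) \<le> (\<Sum>k\<in>{4..N}. 5/4 * (1 / real k ^ 3))"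
    by (intro sum_mono phi_le) auto
  also have "\<dots> = 5/4 * (\<Sum>k=4..N. 1 / real k ^ 3)" by (simp add: sum_distrib_left)
  also have "\<dots> \<le> 5/4 * c3 4" by (intro mult_left_mono tail3) auto
  also have "(\<Sum>k\<in>{1..3}. phi k) = phi 1 + phi 2 + phi 3"
    by (simp add: numeral_3_eq_3 numeral_2_eq_2)
  finally show ?thesis unfolding phi_def c3_def by (simp add: field_simps)
qed

lemma DD_le: "DD N \<le> 42/25"
  using DD_phi phi_sum order_trans by blast


lemma ball_sum:
  fixes g :: "nat \<Rightarrow> real"
  assumes c: "c \<in> octV n" and g0: "g 0 = 0" and mono: "\<And>k. 1 \<le> k \<Longrightarrow> g (Suc k) \<le> g k"
    and nn: "\<And>k. 0 \<le> g k"
  shows "(\<Sum>r\<in>octV n. g (dinf c r)) \<le> g 1 + (\<Sum>k=1..2*n. 16 * real k * g k)"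
proof -
  let ?A = "octV n - {c}"
  have "(\<Sum>r\<in>octV n. g (dinf c r)) = g (dinf c c) + (\<Sum>r\<in>?A. g (dinf c r))"
    by (rule sum.remove[OF finite_V c])
  also have "g (dinf c c) = 0" using g0 by simp
  finally have e: "(\<Sum>r\<in>octV n. g (dinf c r)) = (\<Sum>r\<in>?A. g (dinf c r))" by simp
  have fb: "\<And>w. w \<in> ?A \<Longrightarrow> 1 \<le> dinf c w \<and> dinf c w \<le> 2*n"
  proof -
    fix w assume w: "w \<in> ?A"
    then have "dinf c w \<noteq> 0" using dinf_0 by auto
    moreover have "dinf c w \<le> 2*n" using dinf_le_2n c w by auto
    ultimately show "1 \<le> dinf c w \<and> dinf c w \<le> 2*n" by simp
  qed
  have cnt: "\<And>k. k \<le> 2*n \<Longrightarrow> real (card {w\<in>?A. dinf c w \<le> k}) \<le> 8 * real k ^ 2 + 8 * real k + 1"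
    using V_ball'[OF c] by blast
  have "(\<Sum>r\<in>?A. g (dinf c r)) \<le> g 1 * (\<lambda>k. 8 * real k ^ 2 + 8 * real k + 1) 0
      + (\<Sum>k=1..2*n. g k * ((\<lambda>k. 8 * real k ^ 2 + 8 * real k + 1) k - (\<lambda>k. 8 * real k ^ 2 + 8 * real k + 1) (k - 1)))"
    by (rule abel_upper[of ?A "dinf c" "2*n" g "\<lambda>k. 8 * real k ^ 2 + 8 * real k + 1", OF _ fb mono nn cnt])
       (use finite_V in auto)
  also have "\<dots> = g 1 + (\<Sum>k=1..2*n. 16 * real k * g k)"
  proof -
    have "(\<Sum>k=1..2*n. g k * ((8 * real k ^ 2 + 8 * real k + 1) - (8 * real (k-1) ^ 2 + 8 * real (k-1) + 1)))
        = (\<Sum>k=1..2*n. 16 * real k * g k)"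
    proof (rule sum.cong[OF refl])
      fix k assume "k \<in> {1..2*n}"
      then have "real (k-1) = real k - 1" by auto
      then show "g k * ((8 * real k ^ 2 + 8 * real k + 1) - (8 * real (k-1) ^ 2 + 8 * real (k-1) + 1)) = 16 * real k * g k"
        by (simp add: algebra_simps power2_eq_square)
    qed
    then show ?thesis by simp
  qed
  finally show ?thesis using e by simp
qed

definition hh :: "nat \<Rightarrow> nat \<Rightarrow> real" where
  "hh x y = 1 / (real x ^ 2 * real y ^ 2 * real (max x y) ^ 2)"

definition GG :: "nat \<Rightarrow> nat \<Rightarrow> real" where
  "GG N x = (\<Sum>k=1..N. 1 / (real k * real (max x k) ^ 2))"

definition FF :: "nat \<Rightarrow> nat \<Rightarrow> real" where
  "FF N x = 1 / real x ^ 2 * (1 / real x ^ 2 + 16 * GG N x)"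

lemma GG_nonneg: "GG N x \<ge> 0" unfolding GG_def by (intro sum_nonneg) auto

lemma GG_mono: "GG N (Suc x) \<le> GG N x"
  unfolding GG_def
proof (intro sum_mono)
  fix k assume k: "k \<in> {1..N}"
  have "real (max x k) ^ 2 \<le> real (max (Suc x) k) ^ 2" by (intro power_mono) auto
  then show "1 / (real k * real (max (Suc x) k) ^ 2) \<le> 1 / (real k * real (max x k) ^ 2)"
    using k by (intro frac_le mult_left_mono mult_pos_pos) auto
qed

lemma FF_nonneg: "FF N x \<ge> 0" unfolding FF_def using GG_nonneg by simp

lemma FF_mono: assumes "1 \<le> x" shows "FF N (Suc x) \<le> FF N x"
proof -
  have a: "1 / real (Suc x) ^ 2 \<le> 1 / real x ^ 2" using assms by (intro frac_le power_mono) auto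
  have b: "1 / real (Suc x) ^ 2 + 16 * GG N (Suc x) \<le> 1 / real x ^ 2 + 16 * GG N x"
    using a GG_mono[of N x] by linarith
  show ?thesis unfolding FF_def using a b GG_nonneg by (intro mult_mono) auto
qed

lemma inner: assumes c: "c \<in> octV n" and x: "x \<ge> 1"
  shows "(\<Sum>r\<in>octV n. 1 / (real (dinf c r) ^ 2 * real (max x (dinf c r)) ^ 2)) \<le> 1 / real x ^ 2 + 16 * GG (2*n) x"
proof -
  let ?g = "\<lambda>k. 1 / (real k ^ 2 * real (max x k) ^ 2)"
  have mono: "?g (Suc k) \<le> ?g k" if "1 \<le> k" for k
  proof -
    have "real k ^ 2 * real (max x k) ^ 2 \<le> real (Suc k) ^ 2 * real (max x (Suc k)) ^ 2"
      by (intro mult_mono power_mono) auto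
    then show ?thesis using that x by (intro frac_le) auto
  qed
  have "(\<Sum>r\<in>octV n. ?g (dinf c r)) \<le> ?g 1 + (\<Sum>k=1..2*n. 16 * real k * ?g k)"
    by (rule ball_sum[OF c]) (use mono in auto)
  also have "?g 1 = 1 / real x ^ 2" using x by (simp add: max_def)
  also have "(\<Sum>k=1..2*n. 16 * real k * ?g k) = 16 * GG (2*n) x"
    unfolding GG_def by (simp add: sum_distrib_left power2_eq_square)
  finally show ?thesis .
qed

lemma inner2: assumes c: "c \<in> octV n" and x: "x \<ge> 1"
  shows "(\<Sum>r\<in>octV n. hh x (dinf c r)) \<le> FF (2*n) x"
proof -
  have "(\<Sum>r\<in>octV n. hh x (dinf c r)) = 1 / real x ^ 2 * (\<Sum>r\<in>octV n. 1 / (real (dinf c r) ^ 2 * real (max x (dinf c r)) ^ 2))"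
    unfolding hh_def by (simp add: sum_distrib_left mult.assoc)
  also have "\<dots> \<le> 1 / real x ^ 2 * (1 / real x ^ 2 + 16 * GG (2*n) x)"
    by (intro mult_left_mono inner[OF c x]) simp
  finally show ?thesis unfolding FF_def .
qed

lemma hh_0: "hh 0 y = 0" unfolding hh_def by simp
lemma FF_0: "FF N 0 = 0" unfolding FF_def by simp
lemma hh_nonneg: "hh x y \<ge> 0" unfolding hh_def by simp

lemma outer: assumes c: "c \<in> octV n"
  shows "(\<Sum>q\<in>octV n. FF (2*n) (dinf c q)) \<le> FF (2*n) 1 + (\<Sum>k=1..2*n. 16 * real k * FF (2*n) k)"
  by (rule ball_sum[OF c]) (auto simp: FF_0 FF_mono FF_nonneg)

lemma chain1: assumes c: "c \<in> octV n"
  shows "(\<Sum>q\<in>octV n. \<Sum>r\<in>octV n. hh (dinf c q) (dinf q r)) \<le> FF (2*n) 1 + (\<Sum>k=1..2*n. 16 * real k * FF (2*n) k)"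
proof -
  have "(\<Sum>q\<in>octV n. \<Sum>r\<in>octV n. hh (dinf c q) (dinf q r)) \<le> (\<Sum>q\<in>octV n. FF (2*n) (dinf c q))"
  proof (rule sum_mono)
    fix q assume q: "q \<in> octV n"
    show "(\<Sum>r\<in>octV n. hh (dinf c q) (dinf q r)) \<le> FF (2*n) (dinf c q)"
    proof (cases "dinf c q = 0")
      case True then show ?thesis by (simp add: hh_0 FF_0)
    next
      case False then show ?thesis using inner2[OF q, of "dinf c q"] by simp
    qed
  qed
  then show ?thesis using outer[OF c] by linarith
qed

lemma chain2: assumes c: "c \<in> octV n"
  shows "(\<Sum>q\<in>octV n. \<Sum>r\<in>octV n. hh (dinf c q) (dinf c r)) \<le> FF (2*n) 1 + (\<Sum>k=1..2*n. 16 * real k * FF (2*n) k)"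
proof -
  have "(\<Sum>q\<in>octV n. \<Sum>r\<in>octV n. hh (dinf c q) (dinf c r)) \<le> (\<Sum>q\<in>octV n. FF (2*n) (dinf c q))"
  proof (rule sum_mono)
    fix q assume q: "q \<in> octV n"
    show "(\<Sum>r\<in>octV n. hh (dinf c q) (dinf c r)) \<le> FF (2*n) (dinf c q)"
    proof (cases "dinf c q = 0")
      case True then show ?thesis by (simp add: hh_0 FF_0)
    next
      case False then show ?thesis using inner2[OF c, of "dinf c q"] by simp
    qed
  qed
  then show ?thesis using outer[OF c] by linarith
qed

lemma FF_total: "FF N 1 + (\<Sum>k=1..N. 16 * real k * FF N k) \<le> 470"
proof -
  have g1: "GG N 1 = (\<Sum>k=1..N. 1 / real k ^ 3)"
    unfolding GG_def by (intro sum.cong refl) (auto simp: max_def power_def)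
  have "(\<Sum>k=1..N. 16 * real k * FF N k) = (\<Sum>k=1..N. 16 * (1 / real k ^ 3) + 256 * (GG N k / real k))"
    unfolding FF_def by (intro sum.cong refl) (auto simp: field_simps power_def)
  also have "\<dots> = 16 * (\<Sum>k=1..N. 1 / real k ^ 3) + 256 * (\<Sum>k=1..N. GG N k / real k)"
    by (simp add: sum.distrib sum_distrib_left)
  also have "(\<Sum>k=1..N. GG N k / real k) = DD N"
    unfolding GG_def DD_def tt_def by (intro sum.cong refl) (simp add: sum_divide_distrib mult_ac)
  finally have e: "(\<Sum>k=1..N. 16 * real k * FF N k) = 16 * (\<Sum>k=1..N. 1 / real k ^ 3) + 256 * DD N" .
  have "FF N 1 = 1 + 16 * GG N 1" unfolding FF_def by simp
  then show ?thesis using e g1 zeta3_partial[of N] DD_le[of N] by linarith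
qed


lemma hh_sym: "hh x y = hh y x" unfolding hh_def by (simp add: max.commute mult_ac)

lemma tri3: "1 / real x ^ 2 * (1 / real y ^ 2) * (1 / real z ^ 2) \<le> hh x y + hh y z + hh z x"
proof (cases "x = 0 \<or> y = 0 \<or> z = 0")
  case True
  then show ?thesis using hh_nonneg[of x y] hh_nonneg[of y z] hh_nonneg[of z x] by auto
next
  case False
  then have p: "real x > 0" "real y > 0" "real z > 0" by auto
  have L: "1 / real x ^ 2 * (1 / real y ^ 2) * (1 / real z ^ 2) = 1 / (real x ^ 2 * real y ^ 2 * real z ^ 2)"
    by simp
  consider "max x y \<le> z" | "max y z \<le> x" | "max z x \<le> y" by linarith
  then show ?thesis
  proof cases
    case 1
    have "real (max x y) ^ 2 \<le> real z ^ 2" using 1 by (intro power_mono) auto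
    then have "1 / (real x ^ 2 * real y ^ 2 * real z ^ 2) \<le> hh x y"
      unfolding hh_def using p False by (intro frac_le mult_left_mono mult_pos_pos) (auto simp: max_def)
    then show ?thesis using L hh_nonneg[of y z] hh_nonneg[of z x] by linarith
  next
    case 2
    have "real (max y z) ^ 2 \<le> real x ^ 2" using 2 by (intro power_mono) auto
    then have "1 / (real y ^ 2 * real z ^ 2 * real x ^ 2) \<le> hh y z"
      unfolding hh_def using p False by (intro frac_le mult_left_mono mult_pos_pos) (auto simp: max_def)
    then show ?thesis using L hh_nonneg[of x y] hh_nonneg[of z x] by (simp add: mult_ac)
  next
    case 3
    have "real (max z x) ^ 2 \<le> real y ^ 2" using 3 by (intro power_mono) auto
    then have "1 / (real z ^ 2 * real x ^ 2 * real y ^ 2) \<le> hh z x"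
      unfolding hh_def using p False by (intro frac_le mult_left_mono mult_pos_pos) (auto simp: max_def)
    then show ?thesis using L hh_nonneg[of x y] hh_nonneg[of y z] by (simp add: mult_ac)
  qed
qed

lemma S_bound: assumes u: "u \<in> octV n"
  shows "(\<Sum>a\<in>octV n - {u}. \<Sum>b\<in>octV n - {u,a}.
        1 / real (dinf u a) ^ 2 * (1 / real (dinf a b) ^ 2) * (1 / real (dinf b u) ^ 2)) \<le> 1410"
proof -
  let ?K = "FF (2*n) 1 + (\<Sum>k=1..2*n. 16 * real k * FF (2*n) k)"
  let ?H = "\<lambda>a b. hh (dinf u a) (dinf a b) + hh (dinf a b) (dinf b u) + hh (dinf b u) (dinf u a)"
  have Hnn: "\<And>a b. ?H a b \<ge> 0" using hh_nonneg by (simp add: add_nonneg_nonneg)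
  have "(\<Sum>a\<in>octV n - {u}. \<Sum>b\<in>octV n - {u,a}.
        1 / real (dinf u a) ^ 2 * (1 / real (dinf a b) ^ 2) * (1 / real (dinf b u) ^ 2))
     \<le> (\<Sum>a\<in>octV n - {u}. \<Sum>b\<in>octV n - {u,a}. ?H a b)"
    by (intro sum_mono tri3)
  also have "\<dots> \<le> (\<Sum>a\<in>octV n - {u}. \<Sum>b\<in>octV n. ?H a b)"
    by (intro sum_mono sum_mono2) (auto simp: finite_V Hnn simp del: octV_mem)
  also have "\<dots> \<le> (\<Sum>a\<in>octV n. \<Sum>b\<in>octV n. ?H a b)"
    by (rule sum_mono2[OF finite_V]) (blast, rule sum_nonneg, rule Hnn)
  also have "\<dots> = (\<Sum>a\<in>octV n. \<Sum>b\<in>octV n. hh (dinf u a) (dinf a b))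
      + (\<Sum>a\<in>octV n. \<Sum>b\<in>octV n. hh (dinf a b) (dinf b u))
      + (\<Sum>a\<in>octV n. \<Sum>b\<in>octV n. hh (dinf b u) (dinf u a))"
    by (simp add: sum.distrib)
  also have "(\<Sum>a\<in>octV n. \<Sum>b\<in>octV n. hh (dinf a b) (dinf b u))
      = (\<Sum>b\<in>octV n. \<Sum>a\<in>octV n. hh (dinf u b) (dinf b a))"
    by (subst sum.swap) (simp add: hh_sym dinf_sym)
  also have "(\<Sum>a\<in>octV n. \<Sum>b\<in>octV n. hh (dinf b u) (dinf u a))
      = (\<Sum>a\<in>octV n. \<Sum>b\<in>octV n. hh (dinf u a) (dinf u b))"
    by (simp add: hh_sym dinf_sym)
  finally have "(\<Sum>a\<in>octV n - {u}. \<Sum>b\<in>octV n - {u,a}.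
        1 / real (dinf u a) ^ 2 * (1 / real (dinf a b) ^ 2) * (1 / real (dinf b u) ^ 2)) \<le> ?K + ?K + ?K"
    using chain1[OF u] chain2[OF u] by linarith
  moreover have "?K \<le> 470" by (rule FF_total)
  ultimately show ?thesis by linarith
qed

lemma zeta3_lower: "(\<Sum>i. 1 / (real (Suc i)) ^ 3) \<ge> 1 + 1/8 + 1/27 + 1/64"
proof -
  have s: "summable (\<lambda>i. 1 / (real (Suc i)) ^ 3)"
  proof -
    have "summable (\<lambda>i. inverse (real i ^ 3))" by (rule inverse_power_summable) simp
    then have "summable (\<lambda>i. inverse (real (Suc i) ^ 3))" by (subst summable_Suc_iff)
    then show ?thesis by (simp add: inverse_eq_divide)
  qed
  have "(\<Sum>i<4. 1 / (real (Suc i)) ^ 3) \<le> (\<Sum>i. 1 / (real (Suc i)) ^ 3)"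
    by (rule sum_le_suminf[OF s]) auto
  moreover have "(\<Sum>i<4. 1 / (real (Suc i)) ^ 3) = 1 + 1/8 + 1/27 + 1/64"
    by (simp add: eval_nat_numeral)
  ultimately show ?thesis by simp
qed

theorem lemma11:
  fixes n :: nat and u :: vtx
  assumes "n \<ge> 1" and "u \<in> octV n"
  shows "measure_pmf.prob (OSW_space n) (E7 n u)
         < 36 * (3 * (\<Sum>i. 1 / (real (Suc i)) ^ 3) + 1 / 8)
              * ln (2 * real n) / (ln (real n + 1)) ^ 3"
proof -
  let ?P = "measure_pmf.prob (OSW_space n) (E7 n u)"
  let ?C = "36 * (3 * (\<Sum>i. 1 / (real (Suc i)) ^ 3) + 1 / 8)"
  define t where "t = ln (real n + 1)"
  have C: "?C \<ge> 131" using zeta3_lower by simp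
  have t0: "t > 0" unfolding t_def using assms(1) by simp
  have lt: "ln (2 * real n) \<ge> t" unfolding t_def using assms(1) by simp
  have P1: "?P \<le> 1" by simp
  have P2: "?P \<le> 1410 / (t + 1/2) ^ 3"
  proof -
    have "(1 / LL n)^3 * (\<Sum>a\<in>octV n - {u}. \<Sum>b\<in>octV n - {u,a}.
        1 / real (dinf u a) ^ 2 * (1 / real (dinf a b) ^ 2) * (1 / real (dinf b u) ^ 2)) \<le> (1 / LL n)^3 * 1410"
      using S_bound[OF assms(2)] LL_pos[of n] by (intro mult_left_mono) auto
    then have "?P \<le> (1 / LL n)^3 * 1410"
      using prob_E7_bound[OF assms(2) assms(1)] by linarith
    then show ?thesis unfolding LL_def t_def by (simp add: power_divide)
  qed
  have R: "?C * ln (2 * real n) / t ^ 3 \<ge> 131 / t^2"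
  proof -
    have "?C * ln (2 * real n) \<ge> 131 * t" using C lt t0 by (intro mult_mono) auto
    then have "?C * ln (2 * real n) / t ^ 3 \<ge> 131 * t / t ^ 3" using t0 by (intro divide_right_mono) auto
    moreover have "131 * t / t ^ 3 = 131 / t^2" using t0 by (simp add: power_def field_simps)
    ultimately show ?thesis by simp
  qed
  have "?P < 131 / t^2"
  proof (cases "t \<le> 11")
    case True
    have "t^2 \<le> 11^2" using True t0 by (intro power_mono) auto
    then have "t^2 \<le> 121" by simp
    then have "131 / t^2 \<ge> 131 / 121" using t0 by (intro divide_left_mono) auto
    moreover have "131 / 121 > (1::real)" by simp
    ultimately show ?thesis using P1 by linarith
  next
    case False
    then have t11: "t > 11" by simp
    have "(t + 1/2)^3 \<ge> t^3 + 3/2 * t^2"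
      using t0 by (simp add: power3_eq_cube power2_eq_square algebra_simps)
    moreover have "t^3 \<ge> 11 * t^2" using t11 t0 by (simp add: power3_eq_cube power2_eq_square)
    ultimately have "(t + 1/2)^3 \<ge> 25/2 * t^2" by linarith
    moreover have "t^2 > 0" using t0 by simp
    ultimately have "1410 * t^2 < 131 * (t + 1/2)^3" by linarith
    then have "1410 / (t + 1/2) ^ 3 < 131 / t^2" using t0 by (simp add: field_simps)
    then show ?thesis using P2 by linarith
  qed
  then show ?thesis using R unfolding t_def by linarith
qed


end
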